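(* Let $p$ be a prime with $p\equiv 1\pmod 3$, and let $$D_p(1,1)=\det\left[(i^2+ij+j^2)^{p-2}\right]_{1\le i,j\le p-1}.$$ Then the Legendre symbol satisfies $$\left(\frac{D_p(1,1)}{p}\right)=\begin{cases}0 & \text{if } p\equiv 7\pmod 9,\\ 1 & \text{otherwise.}\end{cases}$$
   Context: $\left(\frac{\cdot}{p}\right)$ denotes the Legendre symbol modulo $p$. The determinant is of the $(p-1)\times(p-1)$ integer matrix whose $(i,j)$ entry is $(i^2+ij+j^2)^{p-2}$. *)

theory Defs
  imports "Jordan_Normal_Form.Determinant" "HOL-Number_Theory.Number_Theory"
begin

text \<open>D_p(1,1): determinant of the (p-1)x(p-1) integer matrix with (i,j) entry
  (i^2+ij+j^2)^(p-2), 1 <= i,j <= p-1. Jordan_Normal_Form matrices are 0-indexed,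
  so entry (i,j) uses i+1, j+1.\<close>
definition D_p11 :: "nat \<Rightarrow> int" where
  "D_p11 p = det (mat (p - 1) (p - 1)
     (\<lambda>(i, j). (int (i+1) ^ 2 + int (i+1) * int (j+1) + int (j+1) ^ 2) ^ (p - 2)))"

end

theory Submission imports Defs begin

lemma fermat_int:
  fixes x :: int
  assumes p: "prime p" and nd: "\<not> int p dvd x"
  shows "[x ^ (p - 1) = 1] (mod int p)"
proof -
  have pp: "int p > 0" using p prime_gt_0_nat by simp
  define a where "a = nat (x mod int p)"
  have ia: "int a = x mod int p" using pp unfolding a_def by simp
  have "\<not> p dvd a"
  proof
    assume "p dvd a"
    hence "int p dvd int a" by simp
    hence "int p dvd x mod int p" using ia by simp
    thus False using nd by (simp add: dvd_mod_iff)
  qed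
  hence "[a ^ (p - 1) = 1] (mod p)" using fermat_theorem p by blast
  hence "[int a ^ (p - 1) = 1] (mod int p)"
    by (metis cong_int_iff of_nat_1 of_nat_power)
  moreover have "[x = int a] (mod int p)" using ia by (simp add: cong_def)
  ultimately show ?thesis by (meson cong_pow cong_trans)
qed

lemma int_mod_cong: "[int (x mod p) = int x] (mod int p)"
  by (simp add: cong_def zmod_int)

lemma mulbij:
  fixes p a :: nat
  assumes p: "prime p" and nd: "\<not> p dvd a"
  shows "bij_betw (\<lambda>y. a*y mod p) {1..p-1} {1..p-1}"
proof -
  have p1: "p > 1" using p prime_gt_1_nat by blast
  have img: "(\<lambda>y. a*y mod p) ` {1..p-1} \<subseteq> {1..p-1}"
  proof
    fix z assume "z \<in> (\<lambda>y. a*y mod p) ` {1..p-1}"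
    then obtain y where y: "y \<in> {1..p-1}" "z = a*y mod p" by auto
    have "\<not> p dvd y" using y p1 by (auto dest: dvd_imp_le)
    hence "\<not> p dvd a*y" using nd p by (simp add: prime_dvd_mult_iff)
    hence "z \<noteq> 0" using y(2) by (simp add: dvd_eq_mod_eq_0)
    moreover have "z < p" using y p1 by auto
    ultimately show "z \<in> {1..p-1}" by auto
  qed
  have inj: "inj_on (\<lambda>y. a*y mod p) {1..p-1}"
  proof
    fix x y assume x: "x \<in> {1..p-1}" and y: "y \<in> {1..p-1}" and e: "a*x mod p = a*y mod p"
    have co: "coprime a p" using prime_imp_coprime[OF p nd] by (simp add: coprime_commute)
    have "[a*x = a*y] (mod p)" using e by (simp add: cong_def)
    hence "[x = y] (mod p)" using cong_mult_lcancel_nat[OF co, of x y] by simp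
    moreover have "x < p" "y < p" using x y p1 by auto
    ultimately show "x = y" by (simp add: cong_def)
  qed
  show ?thesis using img inj endo_inj_surj[of "{1..p-1}" "\<lambda>y. a*y mod p"]
    by (simp add: bij_betw_def)
qed

lemma powsum:
  assumes p: "prime p" and nd: "\<not> (p - 1) dvd e"
  shows "[(\<Sum>y\<in>{1..p-1}. int y ^ e) = 0] (mod int p)"
proof -
  have p1: "p > 1" using p prime_gt_1_nat by blast
  obtain g where g: "residue_primroot p g" using prime_primitive_root_exists[OF p1 p] by blast
  have og: "ord p g = p - 1" using g p by (simp add: residue_primroot_def totient_prime)
  have cop: "coprime p g" using g by (simp add: residue_primroot_def)
  have ndg: "\<not> p dvd g" using cop p1 by (metis coprime_absorb_left nat_dvd_1_iff_1 order_less_irrefl)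
  have ne: "\<not> [g ^ e = 1] (mod p)" using og nd ord_divides[of g e p] by simp
  define S where "S = (\<Sum>y\<in>{1..p-1}. int y ^ e)"
  have "S = (\<Sum>y\<in>{1..p-1}. int (g*y mod p) ^ e)"
    unfolding S_def using sum.reindex_bij_betw[OF mulbij[OF p ndg], of "\<lambda>z. int z ^ e"] by simp
  also have "[\<dots> = (\<Sum>y\<in>{1..p-1}. int (g*y) ^ e)] (mod int p)"
    by (intro cong_sum cong_pow int_mod_cong)
  also have "(\<Sum>y\<in>{1..p-1}. int (g*y) ^ e) = int g ^ e * S"
    unfolding S_def by (simp add: sum_distrib_left power_mult_distrib)
  finally have "[S = int g ^ e * S] (mod int p)" .
  hence "int p dvd S - int g ^ e * S" by (simp add: cong_iff_dvd_diff)
  moreover have "S - int g ^ e * S = S * (1 - int g ^ e)" by (simp add: algebra_simps)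
  ultimately have "int p dvd S * (1 - int g ^ e)" by simp
  moreover have "\<not> int p dvd (1 - int g ^ e)"
  proof
    assume "int p dvd (1 - int g ^ e)"
    hence "[1 = int g ^ e] (mod int p)" by (simp add: cong_iff_dvd_diff)
    hence "[int g ^ e = 1] (mod int p)" by (rule cong_sym)
    hence "[g ^ e = 1] (mod p)" by (metis cong_int_iff of_nat_1 of_nat_power)
    thus False using ne by blast
  qed
  moreover have "prime (int p)" using p by simp
  ultimately have "int p dvd S" by (simp add: prime_dvd_mult_iff)
  thus ?thesis unfolding S_def by (simp add: cong_0_iff)
qed

lemma powsum_dvd:
  assumes p: "prime p" and d: "(p - 1) dvd e"
  shows "[(\<Sum>y\<in>{1..p-1}. int y ^ e) = -1] (mod int p)"
proof -
  have p1: "p > 1" using p prime_gt_1_nat by blast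
  have "[(\<Sum>y\<in>{1..p-1}. int y ^ e) = (\<Sum>y\<in>{1..p-1}. 1)] (mod int p)"
  proof (intro cong_sum)
    fix y assume y: "y \<in> {1..p-1}"
    obtain c where c: "e = (p-1)*c" using d by blast
    have "\<not> int p dvd int y" using y p1 by (auto dest: dvd_imp_le)
    hence "[int y ^ (p-1) = 1] (mod int p)" using fermat_int p by blast
    hence "[(int y ^ (p-1))^c = 1^c] (mod int p)" by (intro cong_pow)
    thus "[int y ^ e = 1] (mod int p)" by (simp add: c power_mult)
  qed
  moreover have "(\<Sum>y\<in>{1..p-1}. (1::int)) = int p - 1" using p1 by simp
  moreover have "[int p - 1 = -1] (mod int p)" by (simp add: cong_iff_dvd_diff)
  ultimately show ?thesis by (metis cong_trans)
qed


lemma mat_mult_index: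
  assumes "i < n" "j < n"
  shows "(mat n n f * mat n n g) $$ (i,j) = (\<Sum>k<n. f (i,k) * g (k,j))"
  using assms by (simp add: scalar_prod_def atLeast0LessThan)

lemma det_cong_mod:
  fixes A B :: "int mat"
  assumes A: "A \<in> carrier_mat n n" and B: "B \<in> carrier_mat n n"
    and c: "\<And>i j. i < n \<Longrightarrow> j < n \<Longrightarrow> [A $$ (i,j) = B $$ (i,j)] (mod m)"
  shows "[det A = det B] (mod m)"
proof -
  have "[(\<Sum>\<sigma> \<in> {\<sigma>. \<sigma> permutes {0..<n}}. signof \<sigma> * (\<Prod>i = 0..<n. A $$ (i, \<sigma> i)))
      = (\<Sum>\<sigma> \<in> {\<sigma>. \<sigma> permutes {0..<n}}. signof \<sigma> * (\<Prod>i = 0..<n. B $$ (i, \<sigma> i)))] (mod m)"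
  proof (rule cong_sum, rule cong_mult, rule cong_refl, rule cong_prod)
    fix \<sigma> i assume s: "\<sigma> \<in> {\<sigma>. \<sigma> permutes {0..<n}}" and i: "i \<in> {0..<n}"
    have "\<sigma> i < n" using s i permutes_in_image[of \<sigma> "{0..<n}" i] by auto
    thus "[A $$ (i, \<sigma> i) = B $$ (i, \<sigma> i)] (mod m)" using c i by auto
  qed
  thus ?thesis unfolding det_def'[OF A] det_def'[OF B] .
qed

lemma det_scale:
  fixes W :: "'a::comm_ring_1 mat"
  assumes W: "W \<in> carrier_mat n n"
  shows "det (mat n n (\<lambda>(i,k). a i * b k * W $$ (i,k))) = (\<Prod>i<n. a i) * (\<Prod>k<n. b k) * det W"
proof -
  have M: "mat n n (\<lambda>(i,k). a i * b k * W $$ (i,k)) \<in> carrier_mat n n" by simp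
  have "\<And>\<sigma>. \<sigma> permutes {0..<n} \<Longrightarrow>
     (\<Prod>i = 0..<n. mat n n (\<lambda>(i,k). a i * b k * W $$ (i,k)) $$ (i, \<sigma> i))
     = (\<Prod>i<n. a i) * (\<Prod>k<n. b k) * (\<Prod>i = 0..<n. W $$ (i, \<sigma> i))"
  proof -
    fix \<sigma> assume s: "\<sigma> permutes {0..<n}"
    have lt: "\<And>i. i \<in> {0..<n} \<Longrightarrow> \<sigma> i < n" using s permutes_in_image[of \<sigma> "{0..<n}"] by auto
    have "(\<Prod>i = 0..<n. mat n n (\<lambda>(i,k). a i * b k * W $$ (i,k)) $$ (i, \<sigma> i))
        = (\<Prod>i = 0..<n. a i * b (\<sigma> i) * W $$ (i, \<sigma> i))"
      by (rule prod.cong, simp, subst index_mat, auto simp: lt)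
    also have "\<dots> = (\<Prod>i = 0..<n. a i) * (\<Prod>i = 0..<n. b (\<sigma> i)) * (\<Prod>i = 0..<n. W $$ (i, \<sigma> i))"
      by (simp add: prod.distrib)
    also have "(\<Prod>i = 0..<n. b (\<sigma> i)) = (\<Prod>i = 0..<n. b i)"
      using prod.permute[OF s, of b] by (simp add: comp_def)
    finally show "(\<Prod>i = 0..<n. mat n n (\<lambda>(i,k). a i * b k * W $$ (i,k)) $$ (i, \<sigma> i))
     = (\<Prod>i<n. a i) * (\<Prod>k<n. b k) * (\<Prod>i = 0..<n. W $$ (i, \<sigma> i))"
      by (simp add: atLeast0LessThan)
  qed
  hence "det (mat n n (\<lambda>(i,k). a i * b k * W $$ (i,k)))
     = (\<Sum>\<sigma> \<in> {\<sigma>. \<sigma> permutes {0..<n}}. signof \<sigma> * ((\<Prod>i<n. a i) * (\<Prod>k<n. b k) * (\<Prod>i = 0..<n. W $$ (i, \<sigma> i))))"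
    unfolding det_def'[OF M] by (intro sum.cong) auto
  also have "\<dots> = (\<Prod>i<n. a i) * (\<Prod>k<n. b k) * det W"
    unfolding det_def'[OF W] sum_distrib_left by (intro sum.cong) (auto simp: algebra_simps)
  finally show ?thesis .
qed

lemma geom_int: "((x::int) - 1) * (\<Sum>k<N. x ^ k) = x ^ N - 1"
  by (induct N) (simp_all add: algebra_simps)

definition Wm :: "nat \<Rightarrow> int mat" where "Wm n = mat n n (\<lambda>(j,k). int (j+1) ^ k)"
definition Wi :: "nat \<Rightarrow> nat \<Rightarrow> int mat" where "Wi p n = mat n n (\<lambda>(k,i). int (i+1) ^ ((p-2)*k))"

lemma WWi_entry:
  assumes p: "prime p" and j: "j < p - 1" and i: "i < p - 1"
  shows "[(Wm (p-1) * Wi p (p-1)) $$ (j,i) = (if j = i then -1 else 0)] (mod int p)"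
proof -
  define n where "n = p - 1"
  have p1: "p > 1" using p prime_gt_1_nat by blast
  have pp: "prime (int p)" using p by simp
  define x where "x = int (j+1) * int (i+1) ^ (p-2)"
  have e0: "(Wm n * Wi p n) $$ (j,i) = (\<Sum>k<n. int (j+1)^k * int (i+1)^((p-2)*k))"
    unfolding Wm_def Wi_def by (subst mat_mult_index) (use i j in \<open>auto simp: n_def\<close>)
  have e: "(Wm n * Wi p n) $$ (j,i) = (\<Sum>k<n. x ^ k)"
    unfolding e0 x_def by (simp add: power_mult power_mult_distrib)
  have ndi: "\<not> int p dvd int (i+1)" using i p1 by (auto dest: dvd_imp_le simp del: of_nat_Suc)
  have ndj: "\<not> int p dvd int (j+1)" using j p1 by (auto dest: dvd_imp_le simp del: of_nat_Suc)
  have ferm: "[int (i+1) ^ (p-1) = 1] (mod int p)" using fermat_int[OF p ndi] .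
  have pm: "p - 1 = Suc (p - 2)" using p1 prime_ge_2_nat[OF p] by simp
  show ?thesis
  proof (cases "j = i")
    case True
    have "x = int (i+1) ^ (p - 1)" unfolding x_def True pm by simp
    hence "[x = 1] (mod int p)" using ferm by simp
    hence "[(\<Sum>k<n. x ^ k) = (\<Sum>k<n. 1 ^ k)] (mod int p)" by (intro cong_sum cong_pow) auto
    moreover have "(\<Sum>k<n. (1::int) ^ k) = int p - 1" using p1 by (simp add: n_def)
    moreover have "[int p - 1 = -1] (mod int p)" by (simp add: cong_iff_dvd_diff)
    ultimately show ?thesis using e True by (simp add: n_def) (metis cong_trans)
  next
    case False
    have "\<not> int p dvd int (i+1) ^ (p-2)" using ndi pp prime_dvd_power by blast
    hence ndx: "\<not> int p dvd x" unfolding x_def using ndj pp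
      by (simp add: prime_dvd_mult_iff del: of_nat_Suc)
    have "[x ^ n = 1] (mod int p)" using fermat_int[OF p ndx] by (simp add: n_def)
    hence "int p dvd (x - 1) * (\<Sum>k<n. x ^ k)" by (simp add: geom_int cong_iff_dvd_diff dvd_diff_commute)
    moreover have "\<not> int p dvd (x - 1)"
    proof
      assume "int p dvd (x - 1)"
      hence "[x = 1] (mod int p)" by (simp add: cong_iff_dvd_diff)
      hence "[x * int (i+1) = 1 * int (i+1)] (mod int p)" by (intro cong_mult cong_refl)
      moreover have "x * int (i+1) = int (j+1) * int (i+1) ^ (p - 1)"
        unfolding x_def pm by (simp add: algebra_simps)
      moreover have "[int (j+1) * int (i+1) ^ (p - 1) = int (j+1) * 1] (mod int p)"
        by (intro cong_mult cong_refl ferm)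
      ultimately have "[int (j+1) = int (i+1)] (mod int p)"
        by (metis cong_sym cong_trans mult_1 mult_1_right)
      hence "[j+1 = i+1] (mod p)" by (metis cong_int_iff)
      moreover have "j + 1 < p" "i + 1 < p" using i j by auto
      ultimately have "j = i" by (simp add: cong_def)
      thus False using False by simp
    qed
    ultimately have "int p dvd (\<Sum>k<n. x ^ k)" using pp by (simp add: prime_dvd_mult_iff)
    thus ?thesis using e False by (simp add: n_def cong_0_iff)
  qed
qed

lemma detW_nz:
  assumes p: "prime p"
  shows "\<not> int p dvd det (Wm (p-1))"
proof
  assume d: "int p dvd det (Wm (p-1))"
  define n where "n = p - 1"
  have c1: "Wm n \<in> carrier_mat n n" "Wi p n \<in> carrier_mat n n" by (simp_all add: Wm_def Wi_def)
  have "[det (Wm n * Wi p n) = det ((-1) \<cdot>\<^sub>m (1\<^sub>m n))] (mod int p)"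
  proof (rule det_cong_mod[of _ n])
    show "Wm n * Wi p n \<in> carrier_mat n n" using c1 by simp
    show "(-1) \<cdot>\<^sub>m (1\<^sub>m n) \<in> carrier_mat n n" by simp
    fix i j assume "i < n" "j < n"
    thus "[(Wm n * Wi p n) $$ (i, j) = ((-1) \<cdot>\<^sub>m (1\<^sub>m n)) $$ (i, j)] (mod int p)"
      using WWi_entry[OF p, of i j] by (cases "i = j") (auto simp: n_def)
  qed
  moreover have "det (Wm n * Wi p n) = det (Wm n) * det (Wi p n)" using det_mult c1 by blast
  moreover have "det ((-1) \<cdot>\<^sub>m (1\<^sub>m n)) = (-1::int) ^ n" by simp
  ultimately have "[det (Wm n) * det (Wi p n) = (-1) ^ n] (mod int p)" by simp
  moreover have "int p dvd det (Wm n) * det (Wi p n)" using d by (simp add: n_def)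
  ultimately have "int p dvd (-1) ^ n" by (simp add: cong_dvd_iff)
  moreover have "((-1::int)^n) * ((-1)^n) = 1" by (simp add: power_mult_distrib[symmetric])
  hence "(-1::int)^n dvd 1" by (metis dvdI)
  ultimately have "int p dvd 1" using dvd_trans by blast
  thus False using p by (metis of_nat_1 int_dvd_int_iff nat_dvd_1_iff_1 not_prime_1)
qed


definition Am :: "nat \<Rightarrow> int mat" where
  "Am p = mat (p - 1) (p - 1)
     (\<lambda>(i, j). (int (i+1) ^ 2 + int (i+1) * int (j+1) + int (j+1) ^ 2) ^ (p - 2))"

definition lam :: "nat \<Rightarrow> nat \<Rightarrow> int" where
  "lam p k = (\<Sum>y\<in>{1..p-1}. (int y ^ 2 + int y + 1) ^ (p - 2) * int y ^ k)"

lemma shift_sum: "(\<Sum>j<(n::nat). f (j+1)) = (\<Sum>y\<in>{1..n}. (f y :: int))"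
  by (induct n) (simp_all add: sum.cl_ivl_Suc)

lemma AW_entry:
  assumes p: "prime p" and i: "i < p - 1" and k: "k < p - 1"
  shows "[(Am p * Wm (p-1)) $$ (i,k) = int (i+1) ^ (2*(p-2)) * lam p k * int (i+1) ^ k] (mod int p)"
proof -
  define n where "n = p - 1"
  define a where "a = i + 1"
  have p1: "p > 1" using p prime_gt_1_nat by blast
  define G where "G b = (int a ^ 2 + int a * int b + int b ^ 2) ^ (p - 2) * int b ^ k" for b
  have nda: "\<not> p dvd a" using i p1 unfolding a_def by (auto dest: dvd_imp_le)
  have "(Am p * Wm n) $$ (i,k) = (\<Sum>j<n. G (j+1))"
    unfolding Am_def Wm_def n_def G_def a_def by (subst mat_mult_index) (use i k in auto)
  also have "\<dots> = (\<Sum>b\<in>{1..n}. G b)" by (rule shift_sum)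
  also have "\<dots> = (\<Sum>y\<in>{1..n}. G (a*y mod p))"
    using sum.reindex_bij_betw[OF mulbij[OF p nda], of G] by (simp add: n_def)
  also have "[\<dots> = (\<Sum>y\<in>{1..n}. G (a*y))] (mod int p)"
  proof (rule cong_sum)
    fix y
    have c: "[int (a*y mod p) = int (a*y)] (mod int p)" by (rule int_mod_cong)
    show "[G (a*y mod p) = G (a*y)] (mod int p)"
      unfolding G_def by (intro cong_mult cong_pow cong_add cong_refl c)
  qed
  also have "(\<Sum>y\<in>{1..n}. G (a*y)) = (\<Sum>y\<in>{1..n}. int a ^ (2*(p-2)) * int a ^ k * ((int y ^ 2 + int y + 1) ^ (p - 2) * int y ^ k))"
  proof (rule sum.cong)
    fix y
    have e: "int a ^ 2 + int a * int (a*y) + int (a*y) ^ 2 = int a ^ 2 * (int y ^ 2 + int y + 1)"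
      by (simp add: algebra_simps power2_eq_square)
    have "G (a*y) = (int a ^ 2 + int a * int (a*y) + int (a*y) ^ 2) ^ (p - 2) * (int a * int y) ^ k"
      unfolding G_def by simp
    also have "\<dots> = (int a ^ 2 * (int y ^ 2 + int y + 1)) ^ (p - 2) * (int a * int y) ^ k"
      by (simp only: e)
    also have "\<dots> = int a ^ (2*(p-2)) * int a ^ k * ((int y ^ 2 + int y + 1) ^ (p - 2) * int y ^ k)"
      by (simp add: power_mult_distrib power_mult mult_ac)
    finally show "G (a*y) = int a ^ (2*(p-2)) * int a ^ k * ((int y ^ 2 + int y + 1) ^ (p - 2) * int y ^ k)" .
  qed simp
  also have "\<dots> = int (i+1) ^ (2*(p-2)) * lam p k * int (i+1) ^ k"
    unfolding lam_def n_def a_def by (simp add: sum_distrib_left algebra_simps)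
  finally show ?thesis by (simp add: n_def)
qed

lemma stepB:
  assumes p: "prime p"
  shows "[D_p11 p = (\<Prod>i<p-1. int (i+1) ^ (2*(p-2))) * (\<Prod>k<p-1. lam p k)] (mod int p)"
proof -
  define n where "n = p - 1"
  have pp: "prime (int p)" using p by simp
  have D: "D_p11 p = det (Am p)" unfolding D_p11_def Am_def ..
  have cA: "Am p \<in> carrier_mat n n" "Wm n \<in> carrier_mat n n" by (simp_all add: Am_def Wm_def n_def)
  define M where "M = mat n n (\<lambda>(i,k). int (i+1) ^ (2*(p-2)) * lam p k * Wm n $$ (i,k))"
  have "[det (Am p * Wm n) = det M] (mod int p)"
  proof (rule det_cong_mod[of _ n])
    show "Am p * Wm n \<in> carrier_mat n n" using cA by simp
    show "M \<in> carrier_mat n n" by (simp add: M_def)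
    fix i j assume ij: "i < n" "j < n"
    have "M $$ (i,j) = int (i+1) ^ (2*(p-2)) * lam p j * int (i+1) ^ j"
      using ij by (simp add: M_def Wm_def)
    thus "[(Am p * Wm n) $$ (i, j) = M $$ (i, j)] (mod int p)"
      using AW_entry[OF p, of i j] ij by (simp add: n_def)
  qed
  moreover have "det (Am p * Wm n) = det (Am p) * det (Wm n)" using det_mult cA by blast
  moreover have "det M = (\<Prod>i<n. int (i+1) ^ (2*(p-2))) * (\<Prod>k<n. lam p k) * det (Wm n)"
    unfolding M_def by (rule det_scale[OF cA(2)])
  ultimately have "[det (Am p) * det (Wm n) = ((\<Prod>i<n. int (i+1) ^ (2*(p-2))) * (\<Prod>k<n. lam p k)) * det (Wm n)] (mod int p)"
    by simp
  moreover have "coprime (det (Wm n)) (int p)"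
    using prime_imp_coprime[OF pp detW_nz[OF p]] by (simp add: coprime_commute n_def)
  ultimately have "[det (Am p) = (\<Prod>i<n. int (i+1) ^ (2*(p-2))) * (\<Prod>k<n. lam p k)] (mod int p)"
    using cong_mult_rcancel by blast
  thus ?thesis using D by (simp add: n_def)
qed


lemma geo2: "(1 - (z::int))^2 * (\<Sum>r<N. int (r+1) * z^r) = 1 - int (N+1) * z^N + int N * z^(N+1)"
  by (induct N) (simp_all add: algebra_simps power2_eq_square)

lemma gauss2: "2 * (\<Sum>r<N. int (r+1)) = int N * (int N + 1)"
  by (induct N) (simp_all add: algebra_simps)

definition hh :: "nat \<Rightarrow> nat \<Rightarrow> int" where
  "hh p y = - (\<Sum>r<p-1. int (r+1) * int y ^ (3*r))"

lemma hid:
  assumes p: "prime p" and p3: "p \<noteq> 3" and y: "y \<in> {1..p-1}"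
  shows "[3 * (int y ^ 2 + int y + 1) ^ (p - 2) = 3 * (int y - 1) * hh p y + (if y = 1 then 1 else 0)] (mod int p)"
proof -
  define n where "n = p - 1"
  define Y where "Y = int y"
  define z where "z = Y ^ 3"
  define H where "H = (\<Sum>r<n. int (r+1) * z ^ r)"
  have hhH: "hh p y = - H" unfolding hh_def H_def z_def Y_def n_def by (simp add: power_mult)
  have p2: "p \<ge> 2" using p prime_ge_2_nat by blast
  have pp: "prime (int p)" using p by simp
  have Yb: "1 \<le> Y" "Y \<le> int p - 1" using y p2 unfolding Y_def by auto
  have ndY: "\<not> int p dvd Y"
  proof
    assume "int p dvd Y"
    hence "int p \<le> Y" using Yb zdvd_imp_le by auto
    thus False using Yb by simp
  qed
  show ?thesis
  proof (cases "y = 1")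
    case True
    have "\<not> int p dvd 3"
    proof
      assume "int p dvd 3"
      hence "p dvd 3" by (metis int_dvd_int_iff of_nat_numeral)
      hence "p \<le> 3" by (auto dest: dvd_imp_le)
      hence "p = 2" using p2 p3 by auto
      thus False using \<open>p dvd 3\<close> by simp
    qed
    hence f: "[3 ^ (p - 1) = 1] (mod int p)" using fermat_int[OF p] by simp
    have pm: "p - 1 = Suc (p - 2)" using p2 by simp
    have "3 * (int y ^ 2 + int y + 1) ^ (p - 2) = (3::int) ^ (p - 1)" unfolding True pm by simp
    thus ?thesis using f True by simp
  next
    case False
    have p3': "p \<ge> 3" using False y by auto
    have Yb2: "2 \<le> Y" using False y unfolding Y_def by auto
    have fac: "z - 1 = (Y - 1) * (Y ^ 2 + Y + 1)" unfolding z_def by (simp add: algebra_simps power2_eq_square power3_eq_cube)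
    have ndY1: "\<not> int p dvd Y - 1"
    proof
      assume a: "int p dvd Y - 1"
      have "int p \<le> Y - 1" using zdvd_imp_le[OF a] Yb2 by simp
      thus False using Yb by simp
    qed
    show ?thesis
    proof (cases "int p dvd z - 1")
      case True
      hence dq: "int p dvd Y ^ 2 + Y + 1" using fac ndY1 pp by (simp add: prime_dvd_mult_iff)
      have "(Y ^ 2 + Y + 1) dvd (Y ^ 2 + Y + 1) ^ (p - 2)" using p3' by (intro dvd_power) auto
      hence "int p dvd (Y ^ 2 + Y + 1) ^ (p - 2)" using dq dvd_trans by blast
      hence L: "[3 * (int y ^ 2 + int y + 1) ^ (p - 2) = 0] (mod int p)"
        unfolding Y_def by (simp add: cong_0_iff)
      have z1: "[z = 1] (mod int p)" using True by (simp add: cong_iff_dvd_diff)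
      have "[H = (\<Sum>r<n. int (r+1) * 1 ^ r)] (mod int p)"
        unfolding H_def by (intro cong_sum cong_mult cong_refl cong_pow z1)
      moreover have "int p dvd (\<Sum>r<n. int (r+1))"
      proof -
        have "2 * (\<Sum>r<n. int (r+1)) = int n * int p" using gauss2[of n] p2 by (simp add: n_def)
        hence "int p dvd 2 * (\<Sum>r<n. int (r+1))" by simp
        moreover have "\<not> int p dvd 2"
        proof
          assume a: "int p dvd 2"
          have "int p \<le> 2" using zdvd_imp_le[OF a] by simp
          thus False using p3' by simp
        qed
        ultimately show ?thesis using pp by (simp add: prime_dvd_mult_iff)
      qed
      ultimately have "[H = 0] (mod int p)" by (simp add: cong_0_iff cong_dvd_iff)
      hence h0: "[hh p y = 0] (mod int p)" unfolding hhH by (simp add: cong_0_iff)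
      have "[3 * (int y - 1) * hh p y + (if y = 1 then 1 else 0) = 3 * (int y - 1) * 0 + 0] (mod int p)"
        using False by (intro cong_add cong_mult cong_refl h0) auto
      thus ?thesis using L by (metis cong_sym cong_trans add_0 mult_zero_right)
    next
      case False2: False
      have ndz: "\<not> int p dvd z" unfolding z_def using ndY pp prime_dvd_power by blast
      have zn: "[z ^ n = 1] (mod int p)" using fermat_int[OF p ndz] by (simp add: n_def)
      have zp: "z ^ p = z * z ^ (p - 1)" using p2 by (cases p) simp_all
      have g: "(1 - z)^2 * H = 1 - int p * z ^ n + (int p - 1) * (z * z ^ n)"
        using geo2[of z n] p2 unfolding H_def n_def by (simp add: of_nat_diff zp)
      have "[1 - int p * z ^ n + (int p - 1) * (z * z ^ n) = 1 - int p * 1 + (int p - 1) * (z * 1)] (mod int p)"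
        by (intro cong_add cong_diff cong_mult cong_refl zn)
      moreover have "[1 - int p * 1 + (int p - 1) * (z * 1) = 1 - z] (mod int p)"
      proof -
        have "1 - int p * 1 + (int p - 1) * (z * 1) - (1 - z) = int p * (z - 1)" by (simp add: algebra_simps)
        thus ?thesis by (simp add: cong_iff_dvd_diff)
      qed
      ultimately have "[(1 - z)^2 * H = 1 - z] (mod int p)" using g by (metis cong_trans)
      hence "int p dvd (1 - z)^2 * H - (1 - z)" by (simp add: cong_iff_dvd_diff)
      moreover have "(1 - z)^2 * H - (1 - z) = (1 - z) * ((1 - z) * H - 1)" by (simp add: algebra_simps power2_eq_square)
      moreover have "\<not> int p dvd 1 - z" using False2 by (metis dvd_minus_iff minus_diff_eq)
      ultimately have "int p dvd (1 - z) * H - 1" using pp by (simp add: prime_dvd_mult_iff)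
      hence zH: "[(1 - z) * H = 1] (mod int p)" by (simp add: cong_iff_dvd_diff)
      define q where "q = Y ^ 2 + Y + 1"
      have ndq: "\<not> int p dvd q" using False2 fac unfolding q_def by (metis dvd_mult)
      have "q * ((Y - 1) * (- H)) = - ((z - 1) * H)" unfolding fac q_def by (simp add: algebra_simps)
      also have "\<dots> = (1 - z) * H" by (simp add: algebra_simps)
      finally have "q * ((Y - 1) * (- H)) = (1 - z) * H" .
      hence c1: "[q * ((Y - 1) * (- H)) = 1] (mod int p)" using zH by simp
      have pm: "p - 1 = Suc (p - 2)" using p2 by simp
      have "q * q ^ (p - 2) = q ^ (p - 1)" unfolding pm by simp
      hence c2: "[q * q ^ (p - 2) = 1] (mod int p)" using fermat_int[OF p ndq] by simp
      have "coprime q (int p)" using prime_imp_coprime[OF pp ndq] by (simp add: coprime_commute)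
      hence "[q ^ (p - 2) = (Y - 1) * (- H)] (mod int p)"
        using c1 c2 cong_mult_lcancel by (metis cong_sym cong_trans)
      hence "[3 * q ^ (p - 2) = 3 * ((Y - 1) * (- H))] (mod int p)" by (intro cong_mult cong_refl)
      hence c3: "[3 * (int y ^ 2 + int y + 1) ^ (p - 2) = 3 * ((int y - 1) * (- H))] (mod int p)"
        unfolding q_def Y_def .
      have e: "3 * ((int y - 1) * (- H)) = 3 * (int y - 1) * hh p y + (if y = 1 then 1 else 0)"
        using \<open>y \<noteq> 1\<close> unfolding hhH by (simp add: algebra_simps)
      show ?thesis using c3 e by metis
    qed
  qed
qed


definition E :: "nat \<Rightarrow> nat \<Rightarrow> int" where
  "E p c = (\<Sum>r<p-1. if (p-1) dvd 3*r+c then int (r+1) else 0)"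

lemma psd:
  assumes p: "prime p"
  shows "[(\<Sum>y\<in>{1..p-1}. int y ^ e) = (if (p-1) dvd e then -1 else 0)] (mod int p)"
  using powsum[OF p] powsum_dvd[OF p] by auto

lemma lam3:
  assumes p: "prime p" and p3: "p \<noteq> 3"
  shows "[3 * lam p k = 1 + 3 * (E p (k+1) - E p k)] (mod int p)"
proof -
  define n where "n = p - 1"
  have p2: "p \<ge> 2" using p prime_ge_2_nat by blast
  define PS where "PS e = (\<Sum>y\<in>{1..n}. int y ^ e)" for e
  define dl where "dl e = (if n dvd e then -1 else (0::int))" for e
  define c where "c r = int (r+1)" for r
  have "3 * lam p k = (\<Sum>y\<in>{1..n}. 3 * (int y ^ 2 + int y + 1) ^ (p - 2) * int y ^ k)"
    unfolding lam_def n_def by (simp add: sum_distrib_left mult.assoc)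
  also have "[\<dots> = (\<Sum>y\<in>{1..n}. (3 * (int y - 1) * hh p y + (if y = 1 then 1 else 0)) * int y ^ k)] (mod int p)"
  proof (rule cong_sum, rule cong_mult)
    fix y assume "y \<in> {1..n}"
    thus "[3 * (int y ^ 2 + int y + 1) ^ (p - 2) = 3 * (int y - 1) * hh p y + (if y = 1 then 1 else 0)] (mod int p)"
      using hid[OF p p3] by (simp add: n_def)
  qed (rule cong_refl)
  also have "(\<Sum>y\<in>{1..n}. (3 * (int y - 1) * hh p y + (if y = 1 then 1 else 0)) * int y ^ k)
       = (\<Sum>y\<in>{1..n}. 3 * ((int y - 1) * hh p y * int y ^ k) + (if y = 1 then 1 else 0))"
    by (rule sum.cong) (auto simp: algebra_simps)
  also have "\<dots> = 3 * (\<Sum>y\<in>{1..n}. (int y - 1) * hh p y * int y ^ k) + 1"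
    using p2 by (simp add: sum.distrib sum_distrib_left n_def sum.delta)
  finally have part1: "[3 * lam p k = 3 * (\<Sum>y\<in>{1..n}. (int y - 1) * hh p y * int y ^ k) + 1] (mod int p)" .
  have "(\<Sum>y\<in>{1..n}. (int y - 1) * hh p y * int y ^ k)
      = (\<Sum>y\<in>{1..n}. \<Sum>r<n. c r * (int y ^ (3*r+k) - int y ^ (3*r+k+1)))"
  proof (rule sum.cong)
    fix y
    have "(int y - 1) * hh p y * int y ^ k = (\<Sum>r<n. - ((int y - 1) * (c r * int y ^ (3*r)) * int y ^ k))"
      unfolding hh_def c_def n_def by (simp add: sum_distrib_left sum_distrib_right sum_negf)
    also have "\<dots> = (\<Sum>r<n. c r * (int y ^ (3*r+k) - int y ^ (3*r+k+1)))"
      by (rule sum.cong) (simp_all add: power_add algebra_simps)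
    finally show "(int y - 1) * hh p y * int y ^ k = (\<Sum>r<n. c r * (int y ^ (3*r+k) - int y ^ (3*r+k+1)))" .
  qed simp
  also have "\<dots> = (\<Sum>r<n. c r * (PS (3*r+k) - PS (3*r+k+1)))"
    by (subst sum.swap, rule sum.cong, simp, simp add: PS_def right_diff_distrib sum_distrib_left sum_subtractf)
  also have "[\<dots> = (\<Sum>r<n. c r * (dl (3*r+k) - dl (3*r+k+1)))] (mod int p)"
  proof (rule cong_sum, rule cong_mult, rule cong_refl, rule cong_diff)
    fix r
    show "[PS (3*r+k) = dl (3*r+k)] (mod int p)" unfolding PS_def dl_def n_def by (rule psd[OF p])
    show "[PS (3*r+k+1) = dl (3*r+k+1)] (mod int p)" unfolding PS_def dl_def n_def by (rule psd[OF p])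
  qed
  also have "(\<Sum>r<n. c r * (dl (3*r+k) - dl (3*r+k+1))) = E p (k+1) - E p k"
  proof -
    have "(\<Sum>r<n. c r * (dl (3*r+k) - dl (3*r+k+1)))
        = (\<Sum>r<n. (if n dvd 3*r+(k+1) then int (r+1) else 0) - (if n dvd 3*r+k then int (r+1) else 0))"
      by (rule sum.cong) (auto simp: c_def dl_def)
    thus ?thesis unfolding E_def n_def by (simp add: sum_subtractf)
  qed
  finally have "[(\<Sum>y\<in>{1..n}. (int y - 1) * hh p y * int y ^ k) = E p (k+1) - E p k] (mod int p)" .
  hence "[3 * (\<Sum>y\<in>{1..n}. (int y - 1) * hh p y * int y ^ k) + 1 = 3 * (E p (k+1) - E p k) + 1] (mod int p)"
    by (intro cong_add cong_mult cong_refl)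
  hence "[3 * lam p k = 3 * (E p (k+1) - E p k) + 1] (mod int p)" using part1 cong_trans by blast
  thus ?thesis by (simp add: add.commute)
qed


lemma E_nd:
  assumes n: "p - 1 = 3*m" and c: "\<not> 3 dvd c"
  shows "E p c = 0"
proof -
  have "\<And>r. \<not> (p - 1) dvd 3*r + c"
  proof
    fix r assume "(p - 1) dvd 3*r + c"
    hence "3 dvd 3*r + c" unfolding n using dvd_trans[of 3 "3*m"] by auto
    hence "3 dvd c" by (simp add: dvd_add_right_iff)
    thus False using c by simp
  qed
  thus ?thesis unfolding E_def by simp
qed

lemma dvd4:
  fixes x m :: nat
  assumes "x < 4*m"
  shows "m dvd x \<longleftrightarrow> (x = 0 \<or> x = m \<or> x = 2*m \<or> x = 3*m)"
proof
  assume "m dvd x"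
  then obtain q where q: "x = m*q" by blast
  have "q < 4"
  proof (rule ccontr)
    assume "\<not> q < 4"
    hence "m*4 \<le> m*q" by simp
    thus False using q assms by simp
  qed
  hence "q = 0 \<or> q = 1 \<or> q = 2 \<or> q = 3" by auto
  thus "x = 0 \<or> x = m \<or> x = 2*m \<or> x = 3*m" using q by auto
qed auto

lemma E_val:
  assumes n: "p - 1 = 3*m" and m: "m \<ge> 1" and a: "a \<le> m"
  shows "E p (3*a) = 3 * int (if a = 0 then 0 else m - a) + 3 * int m + 3"
proof -
  define r0 where "r0 = (if a = 0 then 0 else m - a)"
  have S: "{r. r < 3*m \<and> (p-1) dvd 3*r + 3*a} = {r0, r0+m, r0+2*m}"
  proof -
    have "\<And>r. r < 3*m \<Longrightarrow> ((p-1) dvd 3*r + 3*a \<longleftrightarrow> m dvd r + a)"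
    proof -
      fix r
      have e: "3*r + 3*a = 3*(r+a)" by simp
      show "((p-1) dvd 3*r + 3*a \<longleftrightarrow> m dvd r + a)" unfolding n e by (rule nat_mult_dvd_cancel1) simp
    qed
    moreover have "\<And>r. r < 3*m \<Longrightarrow> (m dvd r + a \<longleftrightarrow> (r + a = 0 \<or> r + a = m \<or> r + a = 2*m \<or> r + a = 3*m))"
      using a by (intro dvd4) simp
    ultimately have "\<And>r. (r < 3*m \<and> (p-1) dvd 3*r + 3*a) \<longleftrightarrow> (r < 3*m \<and> (r + a = 0 \<or> r + a = m \<or> r + a = 2*m \<or> r + a = 3*m))"
      by blast
    moreover have "\<And>r. (r < 3*m \<and> (r + a = 0 \<or> r + a = m \<or> r + a = 2*m \<or> r + a = 3*m)) \<longleftrightarrow> (r = r0 \<or> r = r0 + m \<or> r = r0 + 2*m)"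
      unfolding r0_def using a m by auto
    ultimately show ?thesis by auto
  qed
  have "E p (3*a) = (\<Sum>r\<in>{r. r < 3*m \<and> (p-1) dvd 3*r + 3*a}. int (r+1))"
    unfolding E_def n by (simp add: sum.inter_filter[symmetric] lessThan_def Collect_conj_eq[symmetric])
  also have "\<dots> = int (r0+1) + int (r0+m+1) + int (r0+2*m+1)"
    unfolding S using m by simp
  finally show ?thesis unfolding r0_def by simp
qed


definition mu :: "nat \<Rightarrow> int" where
  "mu k = (if k mod 3 = 1 then 1 else if k mod 3 = 2 then - (9 * int (k div 3) + 5)
           else if k = 0 then -5 else 9 * int (k div 3) - 2)"

lemma mu_cong:
  assumes p: "prime p" and n: "p - 1 = 3*m" and m: "m \<ge> 1" and k: "k < p - 1"
  shows "[3 * lam p k = mu k] (mod int p)"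
proof -
  have p3: "p \<noteq> 3" using n by presburger
  have ip: "int p = 3 * int m + 1" using n m by linarith
  have L: "[3 * lam p k = 1 + 3 * (E p (k+1) - E p k)] (mod int p)" by (rule lam3[OF p p3])
  define t where "t = k div 3"
  have kt: "k = 3*t + k mod 3" unfolding t_def by simp
  have "k mod 3 = 0 \<or> k mod 3 = 1 \<or> k mod 3 = 2" by auto
  moreover {
    assume r: "k mod 3 = 1"
    have "E p (k+1) = 0" using r by (intro E_nd[OF n]) presburger
    moreover have "E p k = 0" using r by (intro E_nd[OF n]) presburger
    ultimately have ?thesis using L r by (simp add: mu_def)
  } moreover {
    assume r: "k mod 3 = 2"
    have k1: "k + 1 = 3*(t+1)" using kt r by simp
    have tm: "t + 1 \<le> m" using k kt r n by simp
    have "E p (k+1) = 3 * int (m - (t+1)) + 3 * int m + 3" unfolding k1 using E_val[OF n m tm] by simp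
    also have "\<dots> = 6 * int m - 3 * int t" using tm by (simp add: of_nat_diff)
    finally have e1: "E p (k+1) = 6 * int m - 3 * int t" .
    have "E p k = 0" using r by (intro E_nd[OF n]) presburger
    hence "1 + 3 * (E p (k+1) - E p k) - mu k = 6 * int p"
      using e1 r ip by (simp add: mu_def t_def)
    hence "[1 + 3 * (E p (k+1) - E p k) = mu k] (mod int p)" by (simp add: cong_iff_dvd_diff)
    hence ?thesis using L cong_trans by blast
  } moreover {
    assume r: "k mod 3 = 0"
    have k1: "k = 3*t" using kt r by simp
    have tm: "t \<le> m" using k kt r n by simp
    have "E p (k+1) = 0" using r by (intro E_nd[OF n]) presburger
    moreover have "E p k = 3 * int (if t = 0 then 0 else m - t) + 3 * int m + 3"
      unfolding k1 using E_val[OF n m tm] by simp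
    moreover have mk: "mu k = (if t = 0 then -5 else 9 * int t - 2)" unfolding k1 by (simp add: mu_def)
    ultimately have "1 + 3 * (E p (k+1) - E p k) - mu k = (if t = 0 then -3 else -6) * int p"
      using tm ip by (cases "t = 0") (simp_all add: of_nat_diff)
    hence "[1 + 3 * (E p (k+1) - E p k) = mu k] (mod int p)" by (simp add: cong_iff_dvd_diff)
    hence ?thesis using L cong_trans by blast
  }
  ultimately show ?thesis by fast
qed


lemma prod3: "(\<Prod>k<3*(m::nat). f k) = (\<Prod>t<m. f (3*t) * f (3*t+1) * f (3*t+2))"
proof (induct m)
  case (Suc m)
  have e: "3 * Suc m = Suc (Suc (Suc (3*m)))" by simp
  show ?case unfolding e using Suc by (simp add: mult_ac)
qed simp

lemma rev_bij: "bij_betw (\<lambda>s. m - s) {1..<m} {1..<(m::nat)}"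
  by (rule bij_betw_byWitness[where f' = "\<lambda>s. m - s"]) auto

definition Qf :: "nat \<Rightarrow> int" where "Qf m = (\<Prod>s\<in>{1..<m}. 9 * int s + 5)"

lemma stepD:
  assumes n: "p - 1 = 3*m" and m: "m \<ge> 1"
  shows "[(\<Prod>k<p-1. mu k) = 25 * (Qf m)^2] (mod int p)"
proof -
  have ip: "int p = 3 * int m + 1" using n m by linarith
  define C where "C = (\<Prod>s\<in>{1..<m}. - (9 * int s + 5))"
  have ins: "{..<m} = insert 0 {1..<m}" using m by auto
  have "(\<Prod>k<p-1. mu k) = (\<Prod>t<m. mu (3*t) * mu (3*t+1) * mu (3*t+2))"
    unfolding n by (rule prod3)
  also have "\<dots> = (\<Prod>t<m. mu (3*t) * (- (9 * int t + 5)))"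
  proof (rule prod.cong)
    fix t :: nat
    have m1: "(3*t+1) mod 3 = 1" "(3*t+2) mod 3 = 2" "(3*t+2) div 3 = t" by presburger+
    have "mu (3*t+1) = 1" using m1 unfolding mu_def by simp
    moreover have "mu (3*t+2) = - (9 * int t + 5)" using m1 unfolding mu_def by simp
    ultimately show "mu (3*t) * mu (3*t+1) * mu (3*t+2) = mu (3*t) * (- (9 * int t + 5))" by simp
  qed simp
  also have "\<dots> = (\<Prod>t<m. mu (3*t)) * (\<Prod>t<m. - (9 * int t + 5))"
    by (rule prod.distrib)
  also have "(\<Prod>t<m. mu (3*t)) = -5 * (\<Prod>t\<in>{1..<m}. 9 * int t - 2)"
  proof -
    have "(\<Prod>t<m. mu (3*t)) = mu 0 * (\<Prod>t\<in>{1..<m}. mu (3*t))" unfolding ins by simp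
    also have "(\<Prod>t\<in>{1..<m}. mu (3*t)) = (\<Prod>t\<in>{1..<m}. 9 * int t - 2)"
      by (rule prod.cong) (auto simp: mu_def)
    finally show ?thesis by (simp add: mu_def)
  qed
  also have "(\<Prod>t<m. - (9 * int t + 5)) = -5 * C"
    unfolding ins C_def by simp
  finally have e1: "(\<Prod>k<p-1. mu k) = 25 * ((\<Prod>t\<in>{1..<m}. 9 * int t - 2) * C)" by simp
  have "(\<Prod>t\<in>{1..<m}. 9 * int t - 2) = (\<Prod>s\<in>{1..<m}. 9 * int (m - s) - 2)"
    using prod.reindex_bij_betw[OF rev_bij[of m], of "\<lambda>t. 9 * int t - 2"] by simp
  also have "[\<dots> = C] (mod int p)" unfolding C_def
  proof (rule cong_prod)
    fix s assume s: "s \<in> {1..<m}"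
    have "9 * int (m - s) - 2 - (- (9 * int s + 5)) = 3 * int p" using s ip by (simp add: of_nat_diff)
    thus "[9 * int (m - s) - 2 = - (9 * int s + 5)] (mod int p)" by (simp add: cong_iff_dvd_diff)
  qed
  finally have "[25 * ((\<Prod>t\<in>{1..<m}. 9 * int t - 2) * C) = 25 * (C * C)] (mod int p)"
    by (intro cong_mult cong_refl)
  moreover have "C * C = (Qf m)^2"
  proof -
    have "C * C = (\<Prod>s\<in>{1..<m}. (- (9 * int s + 5))^2)"
      unfolding C_def by (simp add: power2_eq_square prod.distrib)
    also have "\<dots> = (\<Prod>s\<in>{1..<m}. (9 * int s + 5)^2)" by (simp only: power2_minus)
    also have "\<dots> = (Qf m)^2" unfolding Qf_def by (simp add: prod_power_distrib)
    finally show ?thesis .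
  qed
  ultimately show ?thesis using e1 by simp
qed

lemma stepE:
  assumes p: "prime p" and n: "p - 1 = 3*m" and m: "m \<ge> 1"
  shows "int p dvd Qf m \<longleftrightarrow> p mod 9 = 7"
proof -
  have pp: "prime (int p)" using p by simp
  have p2: "p \<ge> 2" using p prime_ge_2_nat by blast
  have p31: "p = 3*m + 1" using n p2 by simp
  have "int p dvd Qf m \<longleftrightarrow> (\<exists>s\<in>{1..<m}. int p dvd 9 * int s + 5)"
    unfolding Qf_def using pp by (simp add: prime_dvd_prod_iff)
  also have "\<dots> \<longleftrightarrow> (\<exists>s\<in>{1..<m}. 9 * s + 5 = 2 * p)"
  proof -
    have "\<And>s. s \<in> {1..<m} \<Longrightarrow> (int p dvd 9 * int s + 5 \<longleftrightarrow> 9 * s + 5 = 2 * p)"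
    proof -
      fix s assume s: "s \<in> {1..<m}"
      have sm: "s < m" using s by simp
      have "int p dvd 9 * int s + 5 \<longleftrightarrow> p dvd 9 * s + 5"
        by (metis int_dvd_int_iff of_nat_add of_nat_mult of_nat_numeral)
      also have "\<dots> \<longleftrightarrow> (9*s+5 = 0 \<or> 9*s+5 = p \<or> 9*s+5 = 2*p \<or> 9*s+5 = 3*p)"
        using sm p31 by (intro dvd4) simp
      also have "\<dots> \<longleftrightarrow> 9 * s + 5 = 2 * p"
      proof -
        have "9*s+5 \<noteq> 3*m+1" by presburger
        moreover have "9*s+5 \<noteq> 3*p" using sm p31 by simp
        ultimately show ?thesis using p31 by auto
      qed
      finally show "int p dvd 9 * int s + 5 \<longleftrightarrow> 9 * s + 5 = 2 * p" .
    qed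
    thus ?thesis by blast
  qed
  also have "\<dots> \<longleftrightarrow> p mod 9 = 7"
  proof
    assume "\<exists>s\<in>{1..<m}. 9 * s + 5 = 2 * p"
    then obtain s where "9 * s + 5 = 2 * p" by blast
    thus "p mod 9 = 7" by presburger
  next
    assume r: "p mod 9 = 7"
    define q where "q = p div 9"
    have pq: "p = 9*q + 7" using r div_mult_mod_eq[of p 9] unfolding q_def by linarith
    have "2*q+1 \<in> {1..<m}" "9 * (2*q+1) + 5 = 2 * p" using pq p31 by simp_all
    thus "\<exists>s\<in>{1..<m}. 9 * s + 5 = 2 * p" by blast
  qed
  finally show ?thesis .
qed


theorem theorem1p1:
  fixes p :: nat
  assumes "prime p" and "p mod 3 = 1"
  shows "Legendre (D_p11 p) (int p) = (if p mod 9 = 7 then 0 else 1)"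
proof -
  note p = assms(1)
  have p2: "p \<ge> 2" using p prime_ge_2_nat by blast
  define m where "m = p div 3"
  have n: "p - 1 = 3*m" using assms(2) div_mult_mod_eq[of p 3] unfolding m_def by linarith
  have m: "m \<ge> 1" using n p2 by linarith
  have pp: "prime (int p)" using p by simp
  have p3: "\<not> int p dvd 3"
  proof
    assume "int p dvd 3"
    hence "p dvd 3" by (metis int_dvd_int_iff of_nat_numeral)
    hence "p \<le> 3" by (auto dest: dvd_imp_le)
    thus False using n m by linarith
  qed
  have p5: "\<not> int p dvd 5"
  proof
    assume "int p dvd 5"
    hence d5: "p dvd 5" by (metis int_dvd_int_iff of_nat_numeral)
    hence "p \<le> 5" by (auto dest: dvd_imp_le)
    hence "p = 4" using n m p2 by presburger
    thus False using d5 by simp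
  qed
  define S where "S = (\<Prod>i<p-1. int (i+1) ^ (p-2))"
  define PL where "PL = (\<Prod>k<p-1. lam p k)"
  have "(\<Prod>i<p-1. int (i+1) ^ (2*(p-2))) = S^2"
    unfolding S_def prod_power_distrib by (rule prod.cong) (simp_all add: power_mult[symmetric] mult.commute)
  hence B: "[D_p11 p = S^2 * PL] (mod int p)" using stepB[OF p] unfolding PL_def by simp
  have n3: "[3 ^ (p-1) = (1::int)] (mod int p)" using fermat_int[OF p p3] .
  have "3 ^ (p-1) * PL = (\<Prod>k<p-1. 3 * lam p k)" unfolding PL_def by (simp add: prod.distrib)
  also have "[\<dots> = (\<Prod>k<p-1. mu k)] (mod int p)"
    by (rule cong_prod) (use mu_cong[OF p n m] in auto)
  also have "[(\<Prod>k<p-1. mu k) = 25 * (Qf m)^2] (mod int p)" by (rule stepD[OF n m])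
  finally have c1: "[3 ^ (p-1) * PL = 25 * (Qf m)^2] (mod int p)" .
  have "[3 ^ (p-1) * PL = 1 * PL] (mod int p)" by (intro cong_mult n3 cong_refl)
  hence "[PL = 25 * (Qf m)^2] (mod int p)" using c1 by (metis cong_sym cong_trans mult_1)
  hence "[S^2 * PL = S^2 * (25 * (Qf m)^2)] (mod int p)" by (intro cong_mult cong_refl)
  moreover have "S^2 * (25 * (Qf m)^2) = (5 * S * Qf m)^2" by (simp add: power_mult_distrib)
  ultimately have Dc: "[D_p11 p = (5 * S * Qf m)^2] (mod int p)" using B by (metis cong_trans)
  show ?thesis
  proof (cases "p mod 9 = 7")
    case True
    hence "int p dvd Qf m" using stepE[OF p n m] by simp
    hence "int p dvd (5 * S * Qf m)^2" by (simp add: dvd_mult power2_eq_square)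
    hence "[(5 * S * Qf m)^2 = 0] (mod int p)" by (simp add: cong_0_iff)
    hence "[D_p11 p = 0] (mod int p)" using Dc cong_trans by blast
    thus ?thesis using True by (simp add: Legendre_def)
  next
    case False
    hence nQ: "\<not> int p dvd Qf m" using stepE[OF p n m] by simp
    have nS: "\<not> int p dvd S"
    proof
      assume "int p dvd S"
      then obtain i where i: "i < p - 1" and d: "int p dvd int (i+1) ^ (p-2)"
        unfolding S_def using pp by (auto simp: prime_dvd_prod_iff)
      hence "int p dvd int (i+1)" using pp prime_dvd_power by blast
      hence "int p \<le> int (i+1)" by (intro zdvd_imp_le) auto
      thus False using i by simp
    qed
    define x where "x = 5 * S * Qf m"
    have nx: "\<not> int p dvd x" unfolding x_def using nQ nS p5 pp by (simp add: prime_dvd_mult_iff)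
    hence nx2: "\<not> int p dvd x^2" using pp prime_dvd_power by blast
    have n0: "\<not> [D_p11 p = 0] (mod int p)"
    proof
      assume "[D_p11 p = 0] (mod int p)"
      hence "[x^2 = 0] (mod int p)" using Dc unfolding x_def by (metis cong_sym cong_trans)
      thus False using nx2 by (simp add: cong_0_iff)
    qed
    have "QuadRes (int p) (D_p11 p)" unfolding QuadRes_def using Dc unfolding x_def[symmetric]
      by (metis cong_sym)
    thus ?thesis using False n0 by (simp add: Legendre_def)
  qed
qed

end
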